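(* Let $c_1>0>c_2$, $\alpha\in[0,1)$, $t_0\in\mathbb R$, let $d_1,d_2$ be as in the context, $\tilde L=d_1-d_2$, and for $t>t_0$ let $$\tilde p_1(t)=\frac{d_2-d_1e^{-\tilde L(t-t_0)}}{1-e^{-\tilde L(t-t_0)}},\quad \tilde p_2(t)=\frac{d_1-d_2e^{-\tilde L(t-t_0)}}{1-e^{-\tilde L(t-t_0)}},$$ $$\tilde q_1(t)=\ln\tilde L+d_2(t-t_0)-\ln\big(d_1e^{-\tilde L(t-t_0)}-d_2\big),\quad \tilde q_2(t)=-\ln\tilde L+d_1(t-t_0)+\ln\big(d_1-d_2e^{-\tilde L(t-t_0)}\big),$$ and $u(t,x)=\tilde p_1(t)e^{-|x-\tilde q_1(t)|}+\tilde p_2(t)e^{-|x-\tilde q_2(t)|}$. Then $\tilde q_1(t)\le\tilde q_2(t)$ for $t>t_0$, $u(t,x)\to(c_1+c_2)e^{-|x|}$ as $t\downarrow t_0$, and for every $t>t_0$ $$\int_{\mathbb R}\big(u(t,x)^2+u_x(t,x)^2\big)dx=2d_1^2+2d_2^2=2c_1^2+2c_2^2+4\alpha c_1c_2 .$$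
   Context: Here $d_1=\tfrac12(c_1+c_2)+\sqrt{\tfrac14(c_1+c_2)^2-(1-\alpha)c_1c_2}$ and $d_2=\tfrac12(c_1+c_2)-\sqrt{\tfrac14(c_1+c_2)^2-(1-\alpha)c_1c_2}$. *)

theory Defs
  imports "HOL-Analysis.Analysis"
begin

definition dd1 :: "real \<Rightarrow> real \<Rightarrow> real \<Rightarrow> real" where
  "dd1 c1 c2 \<alpha> = (c1 + c2) / 2 + sqrt ((c1 + c2)^2 / 4 - (1 - \<alpha>) * c1 * c2)"

definition dd2 :: "real \<Rightarrow> real \<Rightarrow> real \<Rightarrow> real" where
  "dd2 c1 c2 \<alpha> = (c1 + c2) / 2 - sqrt ((c1 + c2)^2 / 4 - (1 - \<alpha>) * c1 * c2)"

definition LL :: "real \<Rightarrow> real \<Rightarrow> real \<Rightarrow> real" where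
  "LL c1 c2 \<alpha> = dd1 c1 c2 \<alpha> - dd2 c1 c2 \<alpha>"

definition pp1 :: "real \<Rightarrow> real \<Rightarrow> real \<Rightarrow> real \<Rightarrow> real \<Rightarrow> real" where
  "pp1 c1 c2 \<alpha> t0 t =
     (let d1 = dd1 c1 c2 \<alpha>; d2 = dd2 c1 c2 \<alpha>; L = LL c1 c2 \<alpha>; E = exp (- L * (t - t0))
      in (d2 - d1 * E) / (1 - E))"

definition pp2 :: "real \<Rightarrow> real \<Rightarrow> real \<Rightarrow> real \<Rightarrow> real \<Rightarrow> real" where
  "pp2 c1 c2 \<alpha> t0 t =
     (let d1 = dd1 c1 c2 \<alpha>; d2 = dd2 c1 c2 \<alpha>; L = LL c1 c2 \<alpha>; E = exp (- L * (t - t0))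
      in (d1 - d2 * E) / (1 - E))"

definition qq1 :: "real \<Rightarrow> real \<Rightarrow> real \<Rightarrow> real \<Rightarrow> real \<Rightarrow> real" where
  "qq1 c1 c2 \<alpha> t0 t =
     (let d1 = dd1 c1 c2 \<alpha>; d2 = dd2 c1 c2 \<alpha>; L = LL c1 c2 \<alpha>; E = exp (- L * (t - t0))
      in ln L + d2 * (t - t0) - ln (d1 * E - d2))"

definition qq2 :: "real \<Rightarrow> real \<Rightarrow> real \<Rightarrow> real \<Rightarrow> real \<Rightarrow> real" where
  "qq2 c1 c2 \<alpha> t0 t =
     (let d1 = dd1 c1 c2 \<alpha>; d2 = dd2 c1 c2 \<alpha>; L = LL c1 c2 \<alpha>; E = exp (- L * (t - t0))
      in - ln L + d1 * (t - t0) + ln (d1 - d2 * E))"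

definition uu :: "real \<Rightarrow> real \<Rightarrow> real \<Rightarrow> real \<Rightarrow> real \<Rightarrow> real \<Rightarrow> real" where
  "uu c1 c2 \<alpha> t0 t x =
     pp1 c1 c2 \<alpha> t0 t * exp (- \<bar>x - qq1 c1 c2 \<alpha> t0 t\<bar>)
   + pp2 c1 c2 \<alpha> t0 t * exp (- \<bar>x - qq2 c1 c2 \<alpha> t0 t\<bar>)"

end

theory Submission imports Defs begin


lemma left_exp:
  fixes c a :: real assumes c: "c > 0"
  shows "((\<lambda>x. exp (c*x)) has_integral exp (c*a)/c) {..a}"
proof -
  have h: "((\<lambda>x. exp (-c*x)) has_integral exp (-c*(-a))/c) {-a..}"
    by (rule has_integral_exp_minus_to_infinity[OF c])
  have hi: "(\<lambda>x. exp (-c*x)) integrable_on {-a..}" using h by (rule has_integral_integrable)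
  have ai: "(\<lambda>x. exp (-c*x)) absolutely_integrable_on {-a..}"
    by (rule nonnegative_absolutely_integrable_1[OF hi]) simp
  have ii: "integral {-a..} (\<lambda>x. exp (-c*x)) = exp (c*a)/c"
    using integral_unique[OF h] by simp
  have fe: "(\<lambda>x. exp (c*(-x))) = (\<lambda>x. exp (-c*x))" by simp
  have s1: "uminus ` {-a..} \<subseteq> {..a}" by auto
  have s2: "uminus ` {..a} \<subseteq> {-a..}" by auto
  have s3: "{-a..} \<in> sets lebesgue" by simp
  have "(\<lambda>x. exp (c*x)) absolutely_integrable_on {..a} \<and> integral {..a} (\<lambda>x. exp (c*x)) = exp (c*a)/c"
    using has_absolute_integral_reflect_real[OF s1 s2 s3, of "\<lambda>x. exp (c*x)" "exp (c*a)/c"] ai ii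
    unfolding fe by blast
  then show ?thesis
    by (metis has_integral_integral set_lebesgue_integral_eq_integral(1))
qed

lemma peak_deriv:
  fixes x q :: real assumes "x \<noteq> q"
  shows "((\<lambda>y. exp (-\<bar>y-q\<bar>)) has_real_derivative (-sgn (x-q) * exp (-\<bar>x-q\<bar>))) (at x)"
proof (cases "x > q")
  case True
  have "((\<lambda>y. exp (-(y-q))) has_real_derivative (-sgn (x-q) * exp (-\<bar>x-q\<bar>))) (at x)"
    using True by (auto intro!: derivative_eq_intros)
  then show ?thesis
    by (rule has_field_derivative_transform_within_open[where S="{q<..}"]) (use True in auto)
next
  case False
  then have F: "x < q" using assms by auto
  have "((\<lambda>y. exp (y-q)) has_real_derivative (-sgn (x-q) * exp (-\<bar>x-q\<bar>))) (at x)"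
    using F by (auto intro!: derivative_eq_intros)
  then show ?thesis
    by (rule has_field_derivative_transform_within_open[where S="{..<q}"]) (use F in auto)
qed

lemma exp_sq_helpers:
  fixes a :: real
  shows "exp (2*a) = exp a ^ 2" "exp (-2*a) = 1 / exp a ^ 2" "exp (-a) = 1 / exp a"
  by (simp_all add: power2_eq_square exp_add[symmetric] exp_minus field_simps)

lemma exp_times2: "exp ((x::real)*2) = exp x * exp x" "exp (- (x*2)) = exp (-x) * exp (-x)"
  by (simp_all only: mult_2_right minus_add_distrib exp_add)

lemma alg1:
  fixes p1 p2 ea eb :: real assumes "ea > 0" "eb > 0"
  shows "(p1*(1/ea) + p2*(1/eb))^2*ea^2 + (((p2*(1/eb))^2*eb^2 - (p1*ea)^2*(1/eb^2)) - ((p2*(1/eb))^2*ea^2 - (p1*ea)^2*(1/ea^2)))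
        + (p1*ea + p2*eb)^2*(1/eb^2) = 2*p1^2+2*p2^2+4*p1*p2*(ea/eb)"
  using assms by (simp add: field_simps power2_eq_square)

lemma energy_alg:
  fixes d1 d2 E r :: real
  assumes "0 < E" "E < 1" "d1*E - d2 > 0" "d1 - d2*E > 0"
    and "r = (d1-d2)^2*E/((d1*E-d2)*(d1-d2*E))"
  shows "2*((d2-d1*E)/(1-E))^2 + 2*((d1-d2*E)/(1-E))^2 + 4*((d2-d1*E)/(1-E))*((d1-d2*E)/(1-E))*r
         = 2*d1^2+2*d2^2"
proof -
  have ne: "1 - E \<noteq> 0" "d1*E - d2 \<noteq> 0" "d1 - d2*E \<noteq> 0" using assms by auto
  have "4*((d2-d1*E)/(1-E))*((d1-d2*E)/(1-E))*r = - 4*(d1-d2)^2*E/(1-E)^2"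
  proof -
    have g: "\<And>N1 N2 k M::real. N1 \<noteq> 0 \<Longrightarrow> N2 \<noteq> 0 \<Longrightarrow> k \<noteq> 0 \<Longrightarrow>
       4*((-N1)/k)*(N2/k)*(M/(N1*N2)) = -4*M/k^2"
      by (simp add: field_simps power2_eq_square)
    have "d2 - d1*E = -(d1*E-d2)" by simp
    then show ?thesis unfolding assms(5) using g[OF ne(2) ne(3) ne(1)] by simp
  qed
  moreover have "2*((d2-d1*E)/(1-E))^2 + 2*((d1-d2*E)/(1-E))^2 - 4*(d1-d2)^2*E/(1-E)^2 = 2*d1^2+2*d2^2"
  proof -
    have "2*(d2-d1*E)^2 + 2*(d1-d2*E)^2 - 4*(d1-d2)^2*E = (2*d1^2+2*d2^2)*(1-E)^2"
      by (simp add: power2_eq_square algebra_simps)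
    then show ?thesis using ne by (simp add: field_simps)
  qed
  ultimately show ?thesis by simp
qed

lemma energy:
  fixes p1 p2 a b :: real and f :: "real \<Rightarrow> real"
  assumes ab: "a < b" and f: "\<And>x. f x = p1*exp(-\<bar>x-a\<bar>) + p2*exp(-\<bar>x-b\<bar>)"
  shows "((\<lambda>x. (f x)^2 + (deriv f x)^2) has_integral (2*p1^2+2*p2^2+4*p1*p2*exp(a-b))) UNIV"
proof -
  have fe: "f = (\<lambda>x. p1*exp(-\<bar>x-a\<bar>) + p2*exp(-\<bar>x-b\<bar>))" by (rule ext) (rule f)
  have D: "deriv f x = -(p1* sgn(x-a)*exp(-\<bar>x-a\<bar>) + p2* sgn(x-b)*exp(-\<bar>x-b\<bar>))"
    if "x \<noteq> a" "x \<noteq> b" for x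
  proof -
    have "((\<lambda>y. p1*exp(-\<bar>y-a\<bar>) + p2*exp(-\<bar>y-b\<bar>)) has_real_derivative
        (p1*(-sgn(x-a)*exp(-\<bar>x-a\<bar>)) + p2*(-sgn(x-b)*exp(-\<bar>x-b\<bar>)))) (at x)"
      by (intro DERIV_add DERIV_cmult peak_deriv) (use that in auto)
    then show ?thesis unfolding fe by (subst DERIV_imp_deriv) (auto simp: algebra_simps)
  qed
  define A where "A = p1*exp(-a) + p2*exp(-b)"
  define B where "B = p1*exp a + p2*exp b"
  define Cc where "Cc = p1*exp a"
  define Dd where "Dd = p2*exp(-b)"
  let ?g = "\<lambda>x. (f x)^2 + (deriv f x)^2"
  have H1: "((\<lambda>x. 2*A^2*exp(2*x)) has_integral A^2*exp(2*a)) {..a}"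
    using has_integral_mult_right[OF left_exp[of 2 a], of "2*A^2"] by simp
  have H3: "((\<lambda>x. 2*B^2*exp(-2*x)) has_integral B^2*exp(-2*b)) {b..}"
    using has_integral_mult_right[OF has_integral_exp_minus_to_infinity[of 2 b], of "2*B^2"] by simp
  have H2: "((\<lambda>x. 2*Cc^2*exp(-2*x) + 2*Dd^2*exp(2*x)) has_integral
       ((Dd^2*exp(2*b) - Cc^2*exp(-2*b)) - (Dd^2*exp(2*a) - Cc^2*exp(-2*a)))) {a..b}"
  proof (rule fundamental_theorem_of_calculus)
    show "a \<le> b" using ab by simp
    fix x :: real
    have "((\<lambda>x. Dd^2*exp(2*x) - Cc^2*exp(-2*x)) has_real_derivative (2*Cc^2*exp(-2*x) + 2*Dd^2*exp(2*x))) (at x)"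
      by (rule derivative_eq_intros refl)+ (simp add: algebra_simps)
    then show "((\<lambda>x. Dd^2*exp(2*x) - Cc^2*exp(-2*x)) has_vector_derivative (2*Cc^2*exp(-2*x) + 2*Dd^2*exp(2*x))) (at x within {a..b})"
      by (simp add: has_real_derivative_iff_has_vector_derivative[symmetric] has_field_derivative_at_within)
  qed
  have G1: "((\<lambda>x. (f x)^2 + (deriv f x)^2) has_integral A^2*exp(2*a)) {..a}"
  proof (rule has_integral_spike_finite[OF _ _ H1])
    show "finite {a}" by simp
    fix x assume x: "x \<in> {..a} - {a}"
    then have xa: "x < a" "x < b" using ab by auto
    have fx: "f x = A*exp x" using xa
      by (simp add: f A_def exp_diff exp_minus abs_if field_simps)
    have dx: "deriv f x = A*exp x" using xa
      by (simp add: D A_def exp_diff exp_minus abs_if field_simps)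
    show "(f x)^2 + (deriv f x)^2 = 2*A^2*exp(2*x)"
      by (simp add: fx dx exp_times2 power2_eq_square algebra_simps)
  qed
  have G3: "((\<lambda>x. (f x)^2 + (deriv f x)^2) has_integral B^2*exp(-2*b)) {b..}"
  proof (rule has_integral_spike_finite[OF _ _ H3])
    show "finite {b}" by simp
    fix x assume x: "x \<in> {b..} - {b}"
    then have xa: "x > a" "x > b" using ab by auto
    have fx: "f x = B*exp (-x)" using xa
      by (simp add: f B_def exp_diff exp_minus abs_if field_simps)
    have dx: "deriv f x = -B*exp (-x)" using xa
      by (simp add: D B_def exp_diff exp_minus abs_if field_simps)
    show "(f x)^2 + (deriv f x)^2 = 2*B^2*exp(-2*x)"
      using exp_sq_helpers(2)[of x] exp_sq_helpers(3)[of x]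
      by (simp add: fx dx exp_times2 power2_eq_square algebra_simps)
  qed
  have G2: "((\<lambda>x. (f x)^2 + (deriv f x)^2) has_integral
       ((Dd^2*exp(2*b) - Cc^2*exp(-2*b)) - (Dd^2*exp(2*a) - Cc^2*exp(-2*a)))) {a..b}"
  proof (rule has_integral_spike_finite[OF _ _ H2])
    show "finite {a,b}" by simp
    fix x assume x: "x \<in> {a..b} - {a,b}"
    then have xa: "x > a" "x < b" using ab by auto
    have fx: "f x = Cc*exp (-x) + Dd*exp x" using xa
      by (simp add: f Cc_def Dd_def exp_diff exp_minus abs_if field_simps)
    have dx: "deriv f x = -Cc*exp (-x) + Dd*exp x" using xa
      by (simp add: D Cc_def Dd_def exp_diff exp_minus abs_if field_simps)
    have m: "exp x * exp (-x) = 1" by (simp add: exp_minus)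
    show "(f x)^2 + (deriv f x)^2 = 2*Cc^2*exp(-2*x) + 2*Dd^2*exp(2*x)"
      using exp_sq_helpers(2)[of x] exp_sq_helpers(3)[of x] exp_sq_helpers(1)[of x]
      by (simp add: fx dx exp_times2 power2_eq_square field_simps)
  qed
  have U1: "{..a} \<union> {a..b} = {..b}" using ab by auto
  have I1: "((\<lambda>x. (f x)^2 + (deriv f x)^2) has_integral (A^2*exp(2*a) +
       ((Dd^2*exp(2*b) - Cc^2*exp(-2*b)) - (Dd^2*exp(2*a) - Cc^2*exp(-2*a))))) {..b}"
  proof -
    have N: "{..a} \<inter> {a..b} = {a}" using ab by auto
    have "((\<lambda>x. (f x)^2 + (deriv f x)^2) has_integral (A^2*exp(2*a) +
       ((Dd^2*exp(2*b) - Cc^2*exp(-2*b)) - (Dd^2*exp(2*a) - Cc^2*exp(-2*a))))) ({..a} \<union> {a..b})"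
      by (rule has_integral_Un[OF G1 G2]) (unfold N, simp)
    then show ?thesis unfolding U1 .
  qed
  have U2: "{..b} \<union> {b..} = UNIV" by auto
  have I2: "((\<lambda>x. (f x)^2 + (deriv f x)^2) has_integral (A^2*exp(2*a) +
       ((Dd^2*exp(2*b) - Cc^2*exp(-2*b)) - (Dd^2*exp(2*a) - Cc^2*exp(-2*a))) + B^2*exp(-2*b))) UNIV"
  proof -
    have N: "{..b} \<inter> {b..} = {b}" by auto
    have "((\<lambda>x. (f x)^2 + (deriv f x)^2) has_integral (A^2*exp(2*a) +
       ((Dd^2*exp(2*b) - Cc^2*exp(-2*b)) - (Dd^2*exp(2*a) - Cc^2*exp(-2*a))) + B^2*exp(-2*b))) ({..b} \<union> {b..})"
      by (rule has_integral_Un[OF I1 G3]) (unfold N, simp)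
    then show ?thesis unfolding U2 .
  qed
  have eab: "exp (a-b) = exp a / exp b" by (simp add: exp_diff)
  have val: "A^2*exp(2*a) +
       ((Dd^2*exp(2*b) - Cc^2*exp(-2*b)) - (Dd^2*exp(2*a) - Cc^2*exp(-2*a))) + B^2*exp(-2*b)
     = 2*p1^2+2*p2^2+4*p1*p2*exp(a-b)"
    unfolding A_def B_def Cc_def Dd_def eab exp_sq_helpers
    by (rule alg1) auto
  show ?thesis using I2 unfolding val .
qed

lemma core:
  fixes d1 d2 s :: real
  assumes d1: "d1 > 0" and d2: "d2 < 0" and s: "s > 0"
  defines "E \<equiv> exp(-(d1-d2)* s)"
  defines "q1 \<equiv> ln (d1-d2) + d2* s - ln(d1*E - d2)"
  defines "q2 \<equiv> -ln (d1-d2) + d1* s + ln(d1 - d2*E)"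
  shows "0 < E \<and> E < 1 \<and> d1*E - d2 > 0 \<and> d1 - d2*E > 0 \<and>
    exp(q1 - q2) = (d1-d2)^2*E/((d1*E-d2)*(d1-d2*E)) \<and> q1 < q2 \<and>
    q2 - q1 \<le> -(d1*d2)*(1-E)^2/((d1-d2)^2*E)"
proof -
  define L where "L = d1 - d2"
  define N1 where "N1 = d1*E - d2"
  define N2 where "N2 = d1 - d2*E"
  have L: "L > 0" using d1 d2 by (simp add: L_def)
  have E0: "0 < E" by (simp add: E_def)
  have "(d2-d1)* s < 0" using d1 d2 s by (intro mult_neg_pos) auto
  then have E1: "E < 1" by (simp add: E_def)
  have N1: "N1 > 0" unfolding N1_def using d1 d2 E0 mult_pos_pos[of d1 E] by linarith
  have N2: "N2 > 0" unfolding N2_def using d1 d2 E0 mult_neg_pos[of d2 E] by linarith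
  have eq1: "exp q1 = L*exp(d2* s)/N1"
    unfolding q1_def L_def[symmetric] N1_def[symmetric] using L N1 by (simp add: exp_diff exp_add)
  have eq2: "exp q2 = exp(d1* s)*N2/L"
    unfolding q2_def L_def[symmetric] N2_def[symmetric] using L N2 by (simp add: exp_add exp_diff exp_minus field_simps)
  have "-(d1-d2)* s = d2* s - d1* s" by (simp add: algebra_simps)
  then have Eexp: "exp(d2* s) = E*exp(d1* s)" by (simp add: E_def exp_diff)
  have eqr: "exp(q1 - q2) = L^2*E/(N1*N2)"
    using L N1 N2 by (simp add: exp_diff eq1 eq2 Eexp field_simps power2_eq_square)
  have key: "N1*N2 - L^2*E = -(d1*d2)*(1-E)^2"
    by (simp add: N1_def N2_def L_def power2_eq_square algebra_simps)
  have dd: "d1*d2 < 0" using d1 d2 by (simp add: mult_pos_neg)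
  have pos: "-(d1*d2)*(1-E)^2 > 0" using dd E1 mult_neg_pos[of "d1*d2" "(1-E)^2"] by simp
  have "L^2*E < N1*N2" using key pos by simp
  then have "exp(q1-q2) < 1" unfolding eqr using N1 N2 by simp
  then have lt: "q1 < q2" by simp
  have "exp(q2-q1) = 1/exp(q1-q2)" by (simp add: exp_diff)
  also have "\<dots> = N1*N2/(L^2*E)" using eqr by simp
  finally have "exp(q2-q1) = N1*N2/(L^2*E)" .
  then have "q2 - q1 = ln (N1*N2/(L^2*E))" by (metis ln_exp)
  also have "\<dots> \<le> N1*N2/(L^2*E) - 1" using N1 N2 L E0 by (intro ln_le_minus_one) simp
  also have "\<dots> = (N1*N2 - L^2*E)/(L^2*E)" using L E0 by (simp add: field_simps)
  also have "\<dots> = -(d1*d2)*(1-E)^2/(L^2*E)" by (simp only: key)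
  finally have bd: "q2 - q1 \<le> -(d1*d2)*(1-E)^2/(L^2*E)" .
  show ?thesis using E0 E1 N1 N2 eqr lt bd by (simp add: N1_def N2_def L_def)
qed

lemma exp_abs_lip: "\<bar>exp(-\<bar>y\<bar>) - exp(-\<bar>z\<bar>)\<bar> \<le> \<bar>y - (z::real)\<bar>"
proof -
  have key: "exp(-b) - exp(-a) \<le> a - b" if "0 \<le> b" "b \<le> a" for a b :: real
  proof -
    have "1 - (a - b) \<le> exp (-(a-b))" using exp_ge_add_one_self[of "b-a"] by (simp add: algebra_simps)
    then have h: "0 \<le> 1 - exp(-(a-b))" "1 - exp(-(a-b)) \<le> a - b" using that by auto
    have "exp(-b) - exp(-a) = exp(-b)*(1 - exp(-(a-b)))" by (simp add: algebra_simps exp_diff[symmetric] mult_exp_exp)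
    also have "\<dots> \<le> 1 * (a - b)" using h that by (intro mult_mono) auto
    finally show ?thesis by simp
  qed
  have m: "\<bar>exp(-\<bar>y\<bar>) - exp(-\<bar>z\<bar>)\<bar> \<le> \<bar>\<bar>y\<bar> - \<bar>z\<bar>\<bar>"
  proof (cases "\<bar>y\<bar> \<le> \<bar>z\<bar>")
    case True
    then show ?thesis using key[of "\<bar>y\<bar>" "\<bar>z\<bar>"] by auto
  next
    case False
    then show ?thesis using key[of "\<bar>z\<bar>" "\<bar>y\<bar>"] by auto
  qed
  also have "\<dots> \<le> \<bar>y - z\<bar>" by (rule abs_triangle_ineq3)
  finally show ?thesis .
qed

theorem mainTheorem8:
  fixes c1 c2 \<alpha> t0 :: real
  assumes "c1 > 0" and "c2 < 0" and "0 \<le> \<alpha>" and "\<alpha> < 1"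
  shows "(\<forall>t > t0. qq1 c1 c2 \<alpha> t0 t \<le> qq2 c1 c2 \<alpha> t0 t)
    \<and> (\<forall>x. ((\<lambda>t. uu c1 c2 \<alpha> t0 t x) \<longlongrightarrow> (c1 + c2) * exp (- \<bar>x\<bar>)) (at_right t0))
    \<and> (\<forall>t > t0. ((\<lambda>x. (uu c1 c2 \<alpha> t0 t x)^2 + (deriv (\<lambda>y. uu c1 c2 \<alpha> t0 t y) x)^2)
                    has_integral (2 * (dd1 c1 c2 \<alpha>)^2 + 2 * (dd2 c1 c2 \<alpha>)^2)) UNIV)
    \<and> 2 * (dd1 c1 c2 \<alpha>)^2 + 2 * (dd2 c1 c2 \<alpha>)^2 = 2 * c1^2 + 2 * c2^2 + 4 * \<alpha> * c1 * c2"
proof -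
  define d1 where "d1 = dd1 c1 c2 \<alpha>"
  define d2 where "d2 = dd2 c1 c2 \<alpha>"
  have Ld: "LL c1 c2 \<alpha> = d1 - d2" by (simp add: LL_def d1_def d2_def)
  define D where "D = (c1+c2)^2/4 - (1-\<alpha>)*c1*c2"
  have cc: "(1-\<alpha>)*c1*c2 < 0"
  proof -
    have "(1-\<alpha>)*c1 > 0" using assms by simp
    then show ?thesis using assms(2) by (simp add: mult_pos_neg)
  qed
  have Dpos: "D > 0" unfolding D_def using cc by (smt (verit) zero_le_power2 divide_nonneg_pos)
  have sq: "(sqrt D)^2 = D" using Dpos by simp
  have d1e: "d1 = (c1+c2)/2 + sqrt D" by (simp add: d1_def dd1_def D_def)
  have d2e: "d2 = (c1+c2)/2 - sqrt D" by (simp add: d2_def dd2_def D_def)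
  have sum: "d1 + d2 = c1 + c2" by (simp add: d1e d2e)
  have "d1*d2 = ((c1+c2)/2)^2 - (sqrt D)^2" by (simp add: d1e d2e power2_eq_square algebra_simps)
  then have "d1*d2 = ((c1+c2)/2)^2 - D" by (simp only: sq)
  then have prod: "d1*d2 = (1-\<alpha>)*c1*c2" by (simp add: D_def power_divide)
  have gt: "d1 > d2" using Dpos by (simp add: d1e d2e)
  have d1pos: "d1 > 0"
  proof (rule ccontr)
    assume "\<not> d1 > 0"
    then have "d1 \<le> 0" "d2 \<le> 0" using gt by auto
    then have "d1*d2 \<ge> 0" by (rule mult_nonpos_nonpos)
    with prod cc show False by simp
  qed
  have d2neg: "d2 < 0"
  proof (rule ccontr)
    assume "\<not> d2 < 0"
    then have "d1 \<ge> 0" "d2 \<ge> 0" using gt by auto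
    then have "d1*d2 \<ge> 0" by (rule mult_nonneg_nonneg)
    with prod cc show False by simp
  qed
  have P4: "2*d1^2 + 2*d2^2 = 2*c1^2+2*c2^2+4*\<alpha>*c1*c2"
  proof -
    have "d1^2+d2^2 = (d1+d2)^2 - 2*(d1*d2)" by (simp add: power2_eq_square algebra_simps)
    then show ?thesis using sum prod by (simp add: power2_eq_square algebra_simps)
  qed
  define Ef where "Ef = (\<lambda>t. exp(-(d1-d2)*(t-t0)))"
  define Q1 where "Q1 = (\<lambda>t. ln (d1-d2) + d2*(t-t0) - ln(d1*Ef t - d2))"
  define Q2 where "Q2 = (\<lambda>t. -ln (d1-d2) + d1*(t-t0) + ln(d1 - d2*Ef t))"
  define P1 where "P1 = (\<lambda>t. (d2 - d1*Ef t)/(1 - Ef t))"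
  define P2 where "P2 = (\<lambda>t. (d1 - d2*Ef t)/(1 - Ef t))"
  have eqq1: "\<And>t. qq1 c1 c2 \<alpha> t0 t = Q1 t"
    unfolding qq1_def Let_def Ld Q1_def Ef_def d1_def d2_def by (rule refl)
  have eqq2: "\<And>t. qq2 c1 c2 \<alpha> t0 t = Q2 t"
    unfolding qq2_def Let_def Ld Q2_def Ef_def d1_def d2_def by (rule refl)
  have eqp1: "\<And>t. pp1 c1 c2 \<alpha> t0 t = P1 t"
    unfolding pp1_def Let_def Ld P1_def Ef_def d1_def d2_def by (rule refl)
  have eqp2: "\<And>t. pp2 c1 c2 \<alpha> t0 t = P2 t"
    unfolding pp2_def Let_def Ld P2_def Ef_def d1_def d2_def by (rule refl)
  have equ: "\<And>t x. uu c1 c2 \<alpha> t0 t x = P1 t * exp(-\<bar>x - Q1 t\<bar>) + P2 t * exp(-\<bar>x - Q2 t\<bar>)"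
    by (simp add: uu_def eqq1 eqq2 eqp1 eqp2)
  have C: "0 < Ef t \<and> Ef t < 1 \<and> d1*Ef t - d2 > 0 \<and> d1 - d2*Ef t > 0 \<and>
    exp(Q1 t - Q2 t) = (d1-d2)^2*Ef t/((d1*Ef t-d2)*(d1-d2*Ef t)) \<and> Q1 t < Q2 t \<and>
    Q2 t - Q1 t \<le> -(d1*d2)*(1-Ef t)^2/((d1-d2)^2*Ef t)" if "t > t0" for t
  proof -
    have "t - t0 > 0" using that by simp
    from core[OF d1pos d2neg this] show ?thesis unfolding Q1_def Q2_def Ef_def by simp
  qed
  have R1: "\<forall>t > t0. qq1 c1 c2 \<alpha> t0 t \<le> qq2 c1 c2 \<alpha> t0 t"
  proof (intro allI impI)
    fix t assume "t > t0"
    then show "qq1 c1 c2 \<alpha> t0 t \<le> qq2 c1 c2 \<alpha> t0 t" using C[of t] by (simp add: eqq1 eqq2)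
  qed
  have R3: "\<forall>t > t0. ((\<lambda>x. (uu c1 c2 \<alpha> t0 t x)^2 + (deriv (\<lambda>y. uu c1 c2 \<alpha> t0 t y) x)^2)
                    has_integral (2 * d1^2 + 2 * d2^2)) UNIV"
  proof (intro allI impI)
    fix t assume t: "t > t0"
    note c = C[OF t]
    have hi: "((\<lambda>x. (uu c1 c2 \<alpha> t0 t x)^2 + (deriv (uu c1 c2 \<alpha> t0 t) x)^2) has_integral
        (2*(P1 t)^2+2*(P2 t)^2+4*P1 t*P2 t*exp(Q1 t - Q2 t))) UNIV"
      using energy[of "Q1 t" "Q2 t" "uu c1 c2 \<alpha> t0 t" "P1 t" "P2 t"] c equ by blast
    have "2*(P1 t)^2+2*(P2 t)^2+4*P1 t*P2 t*exp(Q1 t - Q2 t) = 2*d1^2+2*d2^2"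
      unfolding P1_def P2_def
      by (rule energy_alg) (use c in auto)
    then show "((\<lambda>x. (uu c1 c2 \<alpha> t0 t x)^2 + (deriv (\<lambda>y. uu c1 c2 \<alpha> t0 t y) x)^2)
                    has_integral (2 * d1^2 + 2 * d2^2)) UNIV" using hi by simp
  qed
  have R2: "\<forall>x. ((\<lambda>t. uu c1 c2 \<alpha> t0 t x) \<longlongrightarrow> (c1 + c2) * exp (- \<bar>x\<bar>)) (at_right t0)"
  proof
    fix x
    have contQ2: "isCont Q2 t0" unfolding Q2_def Ef_def
      by (intro continuous_intros) (use d1pos d2neg in auto)
    have Q2t0: "Q2 t0 = 0" by (simp add: Q2_def Ef_def)
    have Q2lim: "(Q2 \<longlongrightarrow> 0) (at_right t0)"
      by (rule tendsto_within_subset[where S=UNIV]) (use contQ2[unfolded isCont_def] Q2t0 in auto)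
    have T1: "((\<lambda>t. (c1+c2)*exp(-\<bar>x - Q2 t\<bar>)) \<longlongrightarrow> (c1+c2)*exp(-\<bar>x - 0\<bar>)) (at_right t0)"
      by (intro tendsto_intros Q2lim)
    define g where "g = (\<lambda>t. (d1*Ef t - d2)*(-(d1*d2))*(1 - Ef t)/((d1-d2)^2*Ef t))"
    have contg: "isCont g t0" unfolding g_def Ef_def
      by (intro continuous_intros) (use d1pos d2neg in auto)
    have gt0: "g t0 = 0" by (simp add: g_def Ef_def)
    have glim: "(g \<longlongrightarrow> 0) (at_right t0)"
      by (rule tendsto_within_subset[where S=UNIV]) (use contg[unfolded isCont_def] gt0 in auto)
    have bound: "eventually (\<lambda>t. norm (P1 t * (exp(-\<bar>x - Q1 t\<bar>) - exp(-\<bar>x - Q2 t\<bar>))) \<le> g t) (at_right t0)"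
      using eventually_at_right_less[of t0]
    proof eventually_elim
      case (elim t)
      note c = C[OF elim]
      have ap: "\<bar>P1 t\<bar> = (d1*Ef t - d2)/(1 - Ef t)"
      proof -
        have "P1 t = -((d1*Ef t - d2)/(1 - Ef t))" by (simp add: P1_def minus_divide_left)
        then show ?thesis using c by simp
      qed
      have l: "\<bar>exp(-\<bar>x - Q1 t\<bar>) - exp(-\<bar>x - Q2 t\<bar>)\<bar> \<le> Q2 t - Q1 t"
        using exp_abs_lip[of "x - Q1 t" "x - Q2 t"] c by simp
      have "norm (P1 t * (exp(-\<bar>x - Q1 t\<bar>) - exp(-\<bar>x - Q2 t\<bar>)))
          = \<bar>P1 t\<bar> * \<bar>exp(-\<bar>x - Q1 t\<bar>) - exp(-\<bar>x - Q2 t\<bar>)\<bar>" by (simp add: abs_mult)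
      also have "\<dots> \<le> \<bar>P1 t\<bar> * (-(d1*d2)*(1-Ef t)^2/((d1-d2)^2*Ef t))"
        using l c by (intro mult_left_mono) auto
      also have "\<dots> = g t"
      proof -
        have gen: "\<And>A B k M::real. k \<noteq> 0 \<Longrightarrow> M \<noteq> 0 \<Longrightarrow> A/k*(B*k^2/M) = A*B*k/M"
          by (simp add: power2_eq_square field_simps)
        have "1 - Ef t \<noteq> 0" "(d1-d2)^2*Ef t \<noteq> 0" using c d1pos d2neg by auto
        then show ?thesis unfolding ap g_def by (rule gen)
      qed
      finally show ?case .
    qed
    have T2: "((\<lambda>t. P1 t * (exp(-\<bar>x - Q1 t\<bar>) - exp(-\<bar>x - Q2 t\<bar>))) \<longlongrightarrow> 0) (at_right t0)"
      by (rule Lim_null_comparison[OF bound glim])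
    have T: "((\<lambda>t. (c1+c2)*exp(-\<bar>x - Q2 t\<bar>) + P1 t * (exp(-\<bar>x - Q1 t\<bar>) - exp(-\<bar>x - Q2 t\<bar>)))
        \<longlongrightarrow> (c1+c2)*exp(-\<bar>x\<bar>)) (at_right t0)"
      using tendsto_add[OF T1 T2] by simp
    show "((\<lambda>t. uu c1 c2 \<alpha> t0 t x) \<longlongrightarrow> (c1 + c2) * exp (- \<bar>x\<bar>)) (at_right t0)"
    proof (rule Lim_transform_eventually[OF T])
      show "\<forall>\<^sub>F t in at_right t0. (c1+c2)*exp(-\<bar>x - Q2 t\<bar>) + P1 t * (exp(-\<bar>x - Q1 t\<bar>) - exp(-\<bar>x - Q2 t\<bar>))
          = uu c1 c2 \<alpha> t0 t x"
        using eventually_at_right_less[of t0]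
      proof eventually_elim
        case (elim t)
        note c = C[OF elim]
        have ne: "1 - Ef t \<noteq> 0" using c by auto
        have "P1 t + P2 t = ((d1+d2)*(1 - Ef t))/(1 - Ef t)"
          by (simp add: P1_def P2_def add_divide_distrib[symmetric] algebra_simps)
        also have "\<dots> = d1 + d2" using ne by simp
        finally have "P1 t + P2 t = d1 + d2" .
        then have s2: "P2 t = c1 + c2 - P1 t" using sum by simp
        show ?case unfolding equ s2 by (simp add: algebra_simps)
      qed
    qed
  qed
  show ?thesis using R1 R2 R3 P4 unfolding d1_def d2_def by blast
qed

end
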